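(* Let $\mathbf{L}=(L,\le)$ be a nontrivial finite join-semilattice with greatest element $1$ satisfying property $( * )$, and let $(R,\vee,\circ)$ be a subsemiring of $(\mathrm{JM}_1(\mathbf{L}),\vee,\circ)$ such that $f_{a,b}\in R$ for all $a\in L\setminus\{1\}$, $b\in L$, and every $f\in R$ satisfies $f_{a,b}\le f$ for some $a\in L\setminus\{1\}$, $b\in L$. Then $(R,\vee)$ has a neutral element if and only if $1$ is join-irreducible and $\mathbf{L}$ is a lattice. If this neutral element exists, it is neither left nor right absorbing in $(R,\vee,\circ)$.
   Context: $\mathrm{JM}_1(\mathbf{L})$ is the set of maps $f:L\to L$ preserving binary joins with $f(1)=1$, a semiring under pointwise join and composition, ordered pointwise. $f_{a,b}(x)=b$ if $x\le a$ and $1$ otherwise. $\mathbf{L}$ satisfies $( * )$ if there exists $u\in L$ with $1\ne u\vee x$ for all $x\in L\setminus\{1\}$. $1$ is join-irreducible if $1\ne a\vee b$ for all $a,b\in L\setminus\{1\}$. A finite join-semilattice is a lattice iff it has a least element. An element $r$ is right absorbing if $s\circ r=r$ for all $s$, left absorbing if $r\circ s=r$ for all $s$. *)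

theory Defs
  imports Main
begin

definition JM1 :: "('a::{semilattice_sup,order_top} \<Rightarrow> 'a) set" where
  "JM1 = {f. (\<forall>x y. f (sup x y) = sup (f x) (f y)) \<and> f top = top}"

definition fab :: "'a::order_top \<Rightarrow> 'a \<Rightarrow> 'a \<Rightarrow> 'a" where
  "fab a b = (\<lambda>x. if x \<le> a then b else top)"

definition star_prop :: "'a::{semilattice_sup,order_top} itself \<Rightarrow> bool" where
  "star_prop _ = (\<exists>u::'a. \<forall>x. x \<noteq> top \<longrightarrow> sup u x \<noteq> top)"

definition top_join_irreducible :: "'a::{semilattice_sup,order_top} itself \<Rightarrow> bool" where
  "top_join_irreducible _ = (\<forall>a b::'a. a \<noteq> top \<longrightarrow> b \<noteq> top \<longrightarrow> sup a b \<noteq> top)"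

definition is_lattice :: "'a::order itself \<Rightarrow> bool" where
  "is_lattice _ = (\<forall>x y::'a. \<exists>z. z \<le> x \<and> z \<le> y \<and> (\<forall>w. w \<le> x \<and> w \<le> y \<longrightarrow> w \<le> z))"

definition subsemiring_JM1 :: "('a::{semilattice_sup,order_top} \<Rightarrow> 'a) set \<Rightarrow> bool" where
  "subsemiring_JM1 R = (R \<noteq> {} \<and> R \<subseteq> JM1 \<and> (\<forall>f\<in>R. \<forall>g\<in>R. sup f g \<in> R \<and> f \<circ> g \<in> R))"

definition join_neutral :: "('a \<Rightarrow> 'a::semilattice_sup) set \<Rightarrow> ('a \<Rightarrow> 'a) \<Rightarrow> bool" where
  "join_neutral R e = (e \<in> R \<and> (\<forall>f\<in>R. sup e f = f \<and> sup f e = f))"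

definition right_absorbing :: "('a \<Rightarrow> 'a) set \<Rightarrow> ('a \<Rightarrow> 'a) \<Rightarrow> bool" where
  "right_absorbing R r = (\<forall>s\<in>R. s \<circ> r = r)"

definition left_absorbing :: "('a \<Rightarrow> 'a) set \<Rightarrow> ('a \<Rightarrow> 'a) \<Rightarrow> bool" where
  "left_absorbing R r = (\<forall>s\<in>R. r \<circ> s = r)"

end

theory Submission
  imports Defs
begin

lemma bot_lattice:
  fixes z :: "'a::{finite,semilattice_sup,order_top}"
  assumes "\<forall>x. z \<le> x"
  shows "is_lattice TYPE('a)"
  unfolding is_lattice_def
proof (intro allI)
  fix x y :: 'a
  let ?S = "{w. w \<le> x \<and> w \<le> y}"
  have "z \<in> ?S" using assms by simp
  then obtain m where m: "m \<in> ?S" "\<forall>b\<in>?S. m \<le> b \<longrightarrow> m = b"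
    using finite_has_maximal[of ?S] by (metis (no_types, lifting) empty_iff finite)
  show "\<exists>z. z \<le> x \<and> z \<le> y \<and> (\<forall>w. w \<le> x \<and> w \<le> y \<longrightarrow> w \<le> z)"
  proof (intro exI conjI allI impI)
    show "m \<le> x" "m \<le> y" using m by auto
    fix w assume w: "w \<le> x \<and> w \<le> y"
    have "sup w m \<in> ?S" using w m by auto
    then have "m = sup w m" using m(2) by auto
    then show "w \<le> m" using sup.cobounded1[of w m] by simp
  qed
qed

lemma neutral_bot:
  fixes R :: "('a::{finite,semilattice_sup,order_top} \<Rightarrow> 'a) set"
  assumes contains: "\<forall>a b::'a. a \<noteq> top \<longrightarrow> fab a b \<in> R"
    and e: "join_neutral R e" and x: "x \<noteq> top"
  shows "e x \<le> b"
proof -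
  have "sup e (fab x b) = fab x b" using e contains x unfolding join_neutral_def by auto
  then have "e \<le> fab x b" by (simp add: le_iff_sup)
  then have "e x \<le> fab x b x" by (simp add: le_fun_def)
  then show ?thesis by (simp add: fab_def)
qed

theorem proposition7p3:
  fixes R :: "('a::{finite,semilattice_sup,order_top} \<Rightarrow> 'a) set"
  assumes nontriv: "\<exists>x y::'a. x \<noteq> y"
    and star: "star_prop TYPE('a)"
    and sub: "subsemiring_JM1 R"
    and contains: "\<forall>a b::'a. a \<noteq> top \<longrightarrow> fab a b \<in> R"
    and above: "\<forall>f\<in>R. \<exists>a b::'a. a \<noteq> top \<and> fab a b \<le> f"
  shows "((\<exists>e. join_neutral R e) \<longleftrightarrow> (top_join_irreducible TYPE('a) \<and> is_lattice TYPE('a)))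
    \<and> (\<forall>e. join_neutral R e \<longrightarrow> \<not> left_absorbing R e \<and> \<not> right_absorbing R e)"
proof -
  obtain c :: 'a where c: "c \<noteq> top"
  proof -
    from nontriv obtain x y :: 'a where "x \<noteq> y" by blast
    then show ?thesis using that by (cases "x = top") (metis, metis)
  qed
  have part2: "\<not> left_absorbing R e \<and> \<not> right_absorbing R e" if e: "join_neutral R e" for e
  proof -
    let ?s = "fab c top"
    have sR: "?s \<in> R" using contains c by auto
    have st: "\<And>x. ?s x = top" by (simp add: fab_def)
    have "e c \<le> c" using neutral_bot[OF contains e c] .
    then have ec: "e c \<noteq> top" using c by (metis top_unique)
    have "e \<in> JM1" using e sub unfolding join_neutral_def subsemiring_JM1_def by auto
    then have etop: "e top = top" by (simp add: JM1_def)
    have n1: "(e \<circ> ?s) c \<noteq> e c" using st etop ec by simp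
    have n2: "(?s \<circ> e) c \<noteq> e c" using st ec by simp
    have l: "\<not> left_absorbing R e"
    proof
      assume "left_absorbing R e"
      then have "e \<circ> ?s = e" using sR unfolding left_absorbing_def by blast
      then show False using n1 by simp
    qed
    have r: "\<not> right_absorbing R e"
    proof
      assume "right_absorbing R e"
      then have "?s \<circ> e = e" using sR unfolding right_absorbing_def by blast
      then show False using n2 by simp
    qed
    show ?thesis using l r by simp
  qed
  have fwd: "top_join_irreducible TYPE('a) \<and> is_lattice TYPE('a)" if e: "join_neutral R e" for e
  proof -
    have ebot: "\<And>x b. x \<noteq> top \<Longrightarrow> e x \<le> b" using neutral_bot[OF contains e] by blast
    have lat: "is_lattice TYPE('a)" using bot_lattice[of "e c"] ebot[OF c] by blast
    have eR: "e \<in> R" using e unfolding join_neutral_def by auto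
    obtain a b where ab: "a \<noteq> top" "fab a b \<le> e" using above eR by blast
    have all: "x \<le> a" if x: "x \<noteq> top" for x
    proof (rule ccontr)
      assume "\<not> x \<le> a"
      then have "fab a b x = top" by (simp add: fab_def)
      moreover have "fab a b x \<le> e x" using ab(2) by (simp add: le_fun_def)
      ultimately have "e x = top" by (metis top_unique)
      moreover have "e x \<le> c" using ebot x by blast
      ultimately show False using c by (metis top_unique)
    qed
    have "top_join_irreducible TYPE('a)"
      unfolding top_join_irreducible_def
    proof (intro allI impI)
      fix s t :: 'a assume "s \<noteq> top" "t \<noteq> top"
      then have "sup s t \<le> a" using all by simp
      then show "sup s t \<noteq> top" using ab(1) by (metis top_unique)
    qed
    then show ?thesis using lat by simp
  qed
  have bwd: "\<exists>e. join_neutral R e" if tji: "top_join_irreducible TYPE('a)" and lat: "is_lattice TYPE('a)"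
  proof -
    obtain z :: 'a where z: "\<forall>b. b \<le> z \<longrightarrow> z = b"
      using finite_has_minimal[of "UNIV::'a set"] by (metis UNIV_I empty_iff finite)
    have zb: "z \<le> x" for x
    proof -
      obtain w where w: "w \<le> x" "w \<le> z" using lat unfolding is_lattice_def by blast
      then have "w = z" using z by blast
      then show ?thesis using w by simp
    qed
    let ?N = "{x::'a. x \<noteq> top}"
    have "c \<in> ?N" using c by simp
    then obtain m where m: "m \<in> ?N" "\<forall>b\<in>?N. m \<le> b \<longrightarrow> m = b"
      using finite_has_maximal[of ?N] by (metis (no_types, lifting) empty_iff finite)
    have mall: "x \<le> m" if "x \<noteq> top" for x
    proof -
      have "sup x m \<noteq> top" using tji that m(1) unfolding top_join_irreducible_def by auto
      then have "m = sup x m" using m(2) by auto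
      then show ?thesis using sup.cobounded1[of x m] by simp
    qed
    let ?e = "fab m z"
    have eR: "?e \<in> R" using contains m(1) by auto
    have le: "?e \<le> f" if f: "f \<in> R" for f
    proof -
      have "f \<in> JM1" using f sub unfolding subsemiring_JM1_def by auto
      then have ft: "f top = top" by (simp add: JM1_def)
      show ?thesis unfolding le_fun_def
      proof
        fix x
        show "?e x \<le> f x"
        proof (cases "x = top")
          case True then show ?thesis using ft by simp
        next
          case False then show ?thesis using mall zb by (simp add: fab_def)
        qed
      qed
    qed
    have "join_neutral R ?e"
      unfolding join_neutral_def using eR le by (simp add: sup.absorb2 sup.absorb1)
    then show ?thesis by blast
  qed
  show ?thesis using part2 fwd bwd by blast
qed

end
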